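(* Let $N\ge1$ and let $\mathbb{A},\mathbb{B}\in\mathbb{C}_{N\times N}$ be constant matrices with $|\mathbb{B}|\neq 0$ and $\mathbb{A}=\mathbb{B}\mathbb{B}^*$. Let $\varphi(x,t)=(\varphi_1,\dots,\varphi_N)^T$ be a vector of $C^\infty$ complex-valued functions of the real variables $x,t$ satisfying $$\varphi_{xx}=\mathbb{A}\varphi,\qquad \varphi_x=\mathbb{B}\varphi^*,\qquad \varphi_t=-4\varphi_{xxx}.$$ Then the Wronskian $f=|\varphi,\partial_x\varphi,\dots,\partial_x^{N-1}\varphi|$ solves the bilinear mKdV equation $$(D_t+D_x^3)\,f^*\cdot f=0,\qquad D_x^2\,f^*\cdot f=0.$$
   Context: Here $^*$ denotes complex conjugation (entrywise for vectors and matrices). Hirota's bilinear operator is defined by $D_x^mD_t^n\,f(x,t)\cdot g(x,t)=(\partial_x-\partial_{x'})^m(\partial_t-\partial_{t'})^n f(x,t)g(x',t')\big|_{x'=x,\,t'=t}$. The Wronskian $|\varphi,\partial_x\varphi,\dots,\partial_x^{N-1}\varphi|$ is the determinant of the $N\times N$ matrix whose $j$-th column is $\partial_x^{j-1}\varphi$. (Via $v=i(\ln(f^*/f))_x$ such $f$ yields solutions of the mKdV equation $v_t+6v^2v_x+v_{xxx}=0$.) *)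

theory Defs
  imports "HOL-Analysis.Analysis" "Jordan_Normal_Form.Determinant"
begin

definition px :: "(real \<Rightarrow> real \<Rightarrow> complex) \<Rightarrow> real \<Rightarrow> real \<Rightarrow> complex" where
  "px g x t = vector_derivative (\<lambda>y. g y t) (at x)"

definition pt :: "(real \<Rightarrow> real \<Rightarrow> complex) \<Rightarrow> real \<Rightarrow> real \<Rightarrow> complex" where
  "pt g x t = vector_derivative (\<lambda>s. g x s) (at t)"

text \<open>Iterated partial derivative: False = d/dx, True = d/dt (applied from the right).\<close>
fun pder :: "bool list \<Rightarrow> (real \<Rightarrow> real \<Rightarrow> complex) \<Rightarrow> real \<Rightarrow> real \<Rightarrow> complex" where
  "pder [] g = g"
| "pder (b # bs) g = (if b then pt else px) (pder bs g)"

definition smooth2 :: "(real \<Rightarrow> real \<Rightarrow> complex) \<Rightarrow> bool" where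
  "smooth2 g \<longleftrightarrow> (\<forall>bs. (\<forall>x t. (\<lambda>y. pder bs g y t) differentiable (at x)
                            \<and> (\<lambda>s. pder bs g x s) differentiable (at t))
                   \<and> continuous_on UNIV (\<lambda>p. pder bs g (fst p) (snd p)))"

definition wronskian :: "nat \<Rightarrow> (nat \<Rightarrow> real \<Rightarrow> real \<Rightarrow> complex) \<Rightarrow> real \<Rightarrow> real \<Rightarrow> complex" where
  "wronskian N \<phi> x t = Determinant.det (mat N N (\<lambda>(i, j). (px ^^ j) (\<phi> i) x t))"

definition hirota_Dt :: "(real \<Rightarrow> real \<Rightarrow> complex) \<Rightarrow> (real \<Rightarrow> real \<Rightarrow> complex) \<Rightarrow> real \<Rightarrow> real \<Rightarrow> complex" where
  "hirota_Dt f g x t = pt f x t * g x t - f x t * pt g x t"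

definition hirota_Dx2 :: "(real \<Rightarrow> real \<Rightarrow> complex) \<Rightarrow> (real \<Rightarrow> real \<Rightarrow> complex) \<Rightarrow> real \<Rightarrow> real \<Rightarrow> complex" where
  "hirota_Dx2 f g x t = (px ^^ 2) f x t * g x t - 2 * px f x t * px g x t + f x t * (px ^^ 2) g x t"

definition hirota_Dx3 :: "(real \<Rightarrow> real \<Rightarrow> complex) \<Rightarrow> (real \<Rightarrow> real \<Rightarrow> complex) \<Rightarrow> real \<Rightarrow> real \<Rightarrow> complex" where
  "hirota_Dx3 f g x t = (px ^^ 3) f x t * g x t - 3 * (px ^^ 2) f x t * px g x t
                       + 3 * px f x t * (px ^^ 2) g x t - f x t * (px ^^ 3) g x t"

end

theory Submission
  imports Defs
begin


definition Dv :: "nat \<Rightarrow> (nat \<Rightarrow> nat \<Rightarrow> complex) \<Rightarrow> complex" where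
  "Dv N cs = det (mat N N (\<lambda>(i,j). cs j i))"

lemma Dv_cong: "(\<And>i j. i < N \<Longrightarrow> j < N \<Longrightarrow> cs j i = cs' j i) \<Longrightarrow> Dv N cs = Dv N cs'"
  unfolding Dv_def by (rule arg_cong[of _ _ det]) (rule eq_matI, auto)

lemma Dv_rep: "i < N \<Longrightarrow> j < N \<Longrightarrow> i \<noteq> j \<Longrightarrow> (\<And>r. r < N \<Longrightarrow> cs i r = cs j r) \<Longrightarrow> Dv N cs = 0"
  unfolding Dv_def
  by (rule det_identical_columns[of _ N i j]) (auto simp: col_def intro!: eq_vecI)

lemma Dv_swap: assumes "i < N" "j < N" "i \<noteq> j"
  shows "Dv N (\<lambda>k. if k = i then cs j else if k = j then cs i else cs k) = - Dv N cs"
proof -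
  have "mat N N (\<lambda>(a,b). (if b = i then cs j else if b = j then cs i else cs b) a)
      = swapcols i j (mat N N (\<lambda>(a,b). cs b a))"
    by (rule eq_matI) (auto simp: mat_swapcols_def assms)
  then show ?thesis unfolding Dv_def
    using det_swapcols[OF assms, of "mat N N (\<lambda>(a,b). cs b a)"] by simp
qed

lemma Dv_col: assumes "k < N"
  shows "Dv N (cs(k := w)) = (\<Sum>i<N. w i * cofactor (mat N N (\<lambda>(a,b). cs b a)) i k)"
proof -
  define M where "M = mat N N (\<lambda>(a,b). (cs(k:=w)) b a)"
  define M0 where "M0 = mat N N (\<lambda>(a,b). cs b a)"
  have "Dv N (cs(k := w)) = (\<Sum>i<N. M $$ (i,k) * cofactor M i k)"
    unfolding Dv_def M_def by (rule laplace_expansion_column) (auto simp: assms)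
  also have "\<dots> = (\<Sum>i<N. w i * cofactor M0 i k)"
  proof (rule sum.cong[OF refl])
    fix i assume i: "i \<in> {..<N}"
    have "mat_delete M i k = mat_delete M0 i k"
      by (rule eq_matI) (auto simp: mat_delete_def M_def M0_def)
    then show "M $$ (i,k) * cofactor M i k = w i * cofactor M0 i k"
      using i assms by (simp add: cofactor_def M_def)
  qed
  finally show ?thesis by (simp add: M0_def)
qed

lemma Dv_trace:
  assumes A: "A \<in> carrier_mat N N"
  shows "(\<Sum>j<N. Dv N (cs(j := (\<lambda>i. \<Sum>l<N. A $$ (i,l) * cs j l)))) = (\<Sum>i<N. A $$ (i,i)) * Dv N cs"
proof -
  define M where "M = mat N N (\<lambda>(a,b). cs b a)"
  have M: "M \<in> carrier_mat N N" by (simp add: M_def)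
  have adj: "M * adj_mat M = det M \<cdot>\<^sub>m 1\<^sub>m N" using adj_mat[OF M] by simp
  have key: "(\<Sum>j<N. cs j l * cofactor M i j) = (if l = i then det M else 0)" if "l < N" "i < N" for l i
  proof -
    have "(M * adj_mat M) $$ (l,i) = (\<Sum>j<N. M $$ (l,j) * cofactor M i j)"
      using that M adj_mat(1)[OF M] by (auto simp: times_mat_def scalar_prod_def adj_mat_def intro: sum.cong)
    also have "\<dots> = (\<Sum>j<N. cs j l * cofactor M i j)"
      using that by (intro sum.cong) (auto simp: M_def)
    finally show ?thesis using adj that by auto
  qed
  have "(\<Sum>j<N. Dv N (cs(j := (\<lambda>i. \<Sum>l<N. A $$ (i,l) * cs j l))))
      = (\<Sum>j<N. \<Sum>i<N. (\<Sum>l<N. A $$ (i,l) * cs j l) * cofactor M i j)"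
    by (rule sum.cong[OF refl]) (simp add: Dv_col M_def)
  also have "\<dots> = (\<Sum>i<N. \<Sum>j<N. \<Sum>l<N. A $$ (i,l) * cs j l * cofactor M i j)"
    by (subst sum.swap) (simp add: sum_distrib_right)
  also have "\<dots> = (\<Sum>i<N. \<Sum>l<N. \<Sum>j<N. A $$ (i,l) * cs j l * cofactor M i j)"
    by (rule sum.cong[OF refl], rule sum.swap)
  also have "\<dots> = (\<Sum>i<N. \<Sum>l<N. A $$ (i,l) * (\<Sum>j<N. cs j l * cofactor M i j))"
    by (simp add: sum_distrib_left mult.assoc)
  also have "\<dots> = (\<Sum>i<N. A $$ (i,i) * det M)"
    by (rule sum.cong[OF refl]) (simp add: key if_distrib cong: if_cong)
  finally show ?thesis by (simp add: M_def Dv_def sum_distrib_right)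
qed

lemma vec_identity:
  assumes "r < N"
  shows "(\<Sum>i<Suc N. (-1)^i * Dv N (\<lambda>j. if j < i then v j else v (Suc j)) * v i r) = 0"
proof -
  define M where "M = mat (Suc N) (Suc N) (\<lambda>(a,b). if a = 0 then v b r else v b (a - 1))"
  have M: "M \<in> carrier_mat (Suc N) (Suc N)" by (simp add: M_def)
  have "det M = 0"
    by (rule det_identical_rows[OF M, of 0 "Suc r"]) (use assms in \<open>auto simp: M_def row_def intro!: eq_vecI\<close>)
  moreover have "det M = (\<Sum>b<Suc N. M $$ (0,b) * cofactor M 0 b)"
    by (rule laplace_expansion_row[OF M]) simp
  moreover have "M $$ (0,b) * cofactor M 0 b = (-1)^b * Dv N (\<lambda>j. if j < b then v j else v (Suc j)) * v b r" 
    if "b < Suc N" for b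
  proof -
    have "mat_delete M 0 b = mat N N (\<lambda>(i,j). (if j < b then v j else v (Suc j)) i)"
      by (rule eq_matI) (auto simp: mat_delete_def M_def)
    then show ?thesis using that by (simp add: cofactor_def Dv_def M_def)
  qed
  ultimately show ?thesis by simp
qed

lemma plucker:
  assumes N: "2 \<le> N"
    and qr: "\<And>i. i < N - 2 \<Longrightarrow> \<exists>p < N - 1. r p = q i"
  shows "Dv N (\<lambda>j. if j < N - 2 then q j else if j = N - 2 then b else c) * Dv N (\<lambda>j. if j < N - 1 then r j else a)
       - Dv N (\<lambda>j. if j < N - 2 then q j else if j = N - 2 then a else c) * Dv N (\<lambda>j. if j < N - 1 then r j else b)
       + Dv N (\<lambda>j. if j < N - 2 then q j else if j = N - 2 then a else b) * Dv N (\<lambda>j. if j < N - 1 then r j else c) = 0"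
proof -
  define L where "L = (\<lambda>w. Dv N (\<lambda>j. if j < N - 1 then r j else w))"
  define v where "v = (\<lambda>i. if i < N - 2 then q i else if i = N - 2 then a else if i = N - 1 then b else c)"
  define cs where "cs = (\<lambda>j. if j < N - 1 then r j else (\<lambda>_. 0::complex))"
  define C where "C = (\<lambda>\<rho>. cofactor (mat N N (\<lambda>(x,y). cs y x)) \<rho> (N - 1))"
  have Lexp: "L w = (\<Sum>\<rho><N. w \<rho> * C \<rho>)" for w
  proof -
    have "L w = Dv N (cs(N - 1 := w))"
      unfolding L_def by (rule Dv_cong) (auto simp: cs_def)
    also have "\<dots> = (\<Sum>\<rho><N. w \<rho> * C \<rho>)"
      unfolding C_def by (rule Dv_col) (use N in auto)
    finally show ?thesis .
  qed
  have S: "(\<Sum>i<Suc N. (-1)^i * Dv N (\<lambda>j. if j < i then v j else v (Suc j)) * L (v i)) = 0"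
  proof -
    have "(\<Sum>i<Suc N. (-1)^i * Dv N (\<lambda>j. if j < i then v j else v (Suc j)) * L (v i))
      = (\<Sum>i<Suc N. \<Sum>\<rho><N. C \<rho> * ((-1)^i * Dv N (\<lambda>j. if j < i then v j else v (Suc j)) * v i \<rho>))"
      by (rule sum.cong[OF refl]) (simp add: Lexp sum_distrib_left sum_distrib_right mult_ac del: sum.lessThan_Suc)
    also have "\<dots> = (\<Sum>\<rho><N. C \<rho> * (\<Sum>i<Suc N. (-1)^i * Dv N (\<lambda>j. if j < i then v j else v (Suc j)) * v i \<rho>))"
      by (subst sum.swap) (simp add: sum_distrib_left del: sum.lessThan_Suc)
    also have "\<dots> = 0"
      by (simp add: vec_identity del: sum.lessThan_Suc)
    finally show ?thesis .
  qed
  obtain n where n: "N = Suc (Suc n)" using N by (metis add_2_eq_Suc le_Suc_ex)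
  have Z: "L (v i) = 0" if iN: "i < n" for i
  proof -
    obtain p where p: "p < N - 1" "r p = q i" using qr[of i] iN n by auto
    show ?thesis unfolding L_def
      by (rule Dv_rep[of p N "N - 1"]) (use p iN n in \<open>auto simp: v_def\<close>)
  qed
  have low: "(\<Sum>i<n. (-1)^i * Dv N (\<lambda>j. if j < i then v j else v (Suc j)) * L (v i)) = 0"
    by (rule sum.neutral) (simp add: Z)
  have e1: "Dv N (\<lambda>j. if j < n then v j else v (Suc j)) = Dv N (\<lambda>j. if j < N - 2 then q j else if j = N - 2 then b else c)"
    by (rule Dv_cong) (auto simp: v_def n)
  have e2: "Dv N (\<lambda>j. if j < Suc n then v j else v (Suc j)) = Dv N (\<lambda>j. if j < N - 2 then q j else if j = N - 2 then a else c)"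
    by (rule Dv_cong) (auto simp: v_def n)
  have e3: "Dv N (\<lambda>j. if j < Suc (Suc n) then v j else v (Suc j)) = Dv N (\<lambda>j. if j < N - 2 then q j else if j = N - 2 then a else b)"
    by (rule Dv_cong) (auto simp: v_def n)
  have va: "v n = a" "v (Suc n) = b" "v (Suc (Suc n)) = c" by (auto simp: v_def n)
  define F where "F = (\<lambda>i. (-1)^i * Dv N (\<lambda>j. if j < i then v j else v (Suc j)) * L (v i))"
  have split: "(\<Sum>i<Suc N. F i) = (\<Sum>i<n. F i) + F n + F (Suc n) + F (Suc (Suc n))"
    by (simp add: n)
  from S have "(\<Sum>i<Suc N. F i) = 0" by (simp add: F_def del: sum.lessThan_Suc)
  moreover have "(\<Sum>i<n. F i) = 0" using low by (simp add: F_def)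
  ultimately have "F n + F (Suc n) + F (Suc (Suc n)) = 0" unfolding split by simp
  then have "(-1)^n * Dv N (\<lambda>j. if j < N - 2 then q j else if j = N - 2 then b else c) * L a
     + (-1)^(Suc n) * Dv N (\<lambda>j. if j < N - 2 then q j else if j = N - 2 then a else c) * L b
     + (-1)^(Suc (Suc n)) * Dv N (\<lambda>j. if j < N - 2 then q j else if j = N - 2 then a else b) * L c = 0"
    unfolding F_def e1 e2 e3 va .
  then have "(-1)^n * (Dv N (\<lambda>j. if j < N - 2 then q j else if j = N - 2 then b else c) * L a
     - Dv N (\<lambda>j. if j < N - 2 then q j else if j = N - 2 then a else c) * L b
     + Dv N (\<lambda>j. if j < N - 2 then q j else if j = N - 2 then a else b) * L c) = 0"
    by (simp add: algebra_simps)
  then show ?thesis by (simp add: L_def)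
qed




abbreviation Dk :: "nat \<Rightarrow> (nat \<Rightarrow> nat \<Rightarrow> complex) \<Rightarrow> (nat \<Rightarrow> nat) \<Rightarrow> complex" where
  "Dk N u ks \<equiv> Dv N (\<lambda>j. u (ks j))"

lemma Dk_eq: "(\<And>j. j < N \<Longrightarrow> ks j = ks' j) \<Longrightarrow> Dk N u ks = Dk N u ks'"
  by (rule Dv_cong) auto

lemma Dk_0: "i < N \<Longrightarrow> j < N \<Longrightarrow> i \<noteq> j \<Longrightarrow> ks i = ks j \<Longrightarrow> Dk N u ks = 0"
  by (rule Dv_rep[of i N j]) auto

lemma Dk_neg: assumes "i < N" "j < N" "i \<noteq> j"
  and "\<And>k. k < N \<Longrightarrow> ks' k = (if k = i then ks j else if k = j then ks i else ks k)"
  shows "Dk N u ks' = - Dk N u ks"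
proof -
  have "Dk N u ks' = Dv N (\<lambda>k. if k = i then (\<lambda>j. u (ks j)) j else if k = j then (\<lambda>j. u (ks j)) i else (\<lambda>j. u (ks j)) k)"
    by (rule Dv_cong) (auto simp: assms(4))
  also have "\<dots> = - Dk N u ks" by (rule Dv_swap[OF assms(1-3)])
  finally show ?thesis .
qed

lemma low_zero:
  assumes "\<And>j. j < m \<Longrightarrow> j + d < N \<and> ks (j + d) = ks j + d" "0 < d"
  shows "(\<Sum>j<m. Dk N u (ks(j := ks j + d))) = 0"
proof (rule sum.neutral, rule ballI)
  fix j assume "j \<in> {..<m}"
  then have "j + d < N" "ks (j + d) = ks j + d" using assms by auto
  then show "Dk N u (ks(j := ks j + d)) = 0"
    by (intro Dk_0[of j N "j + d"]) (use assms(2) in auto)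
qed

lemma Dv_1: "Dv 1 cs = cs 0 0"
  unfolding Dv_def by (subst det_single) auto

lemma Dv_2: "Dv 2 cs = cs 0 0 * cs 1 1 - cs 1 0 * cs 0 1"
proof -
  have "Dv 2 cs = (\<Sum>j<2. mat 2 2 (\<lambda>(i,j). cs j i) $$ (0,j) * cofactor (mat 2 2 (\<lambda>(i,j). cs j i)) 0 j)"
    unfolding Dv_def by (rule laplace_expansion_row) auto
  also have "\<dots> = cs 0 0 * cs 1 1 - cs 1 0 * cs 0 1"
    by (simp add: numeral_2_eq_2 cofactor_def det_single mat_delete_def)
  finally show ?thesis .
qed

lemma Dv_1S: "Dv (Suc 0) cs = cs 0 0"
  using Dv_1 by simp

lemma Dv_2S: "Dv (Suc (Suc 0)) cs = cs 0 0 * cs 1 1 - cs 1 0 * cs 0 1"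
  using Dv_2 by (simp add: numeral_2_eq_2)

definition k1 :: "nat \<Rightarrow> nat \<Rightarrow> nat" where "k1 N j = (if j = N - 1 then N else j)"
definition k2 :: "nat \<Rightarrow> nat \<Rightarrow> nat" where "k2 N j = (if j = N - 1 then N + 1 else j)"
definition k3 :: "nat \<Rightarrow> nat \<Rightarrow> nat" where "k3 N j = (if j = N - 1 then N + 2 else j)"
definition k11 :: "nat \<Rightarrow> nat \<Rightarrow> nat" where
  "k11 N j = (if j = N - 1 then N else if j = N - 2 then N - 1 else j)"
definition k21 :: "nat \<Rightarrow> nat \<Rightarrow> nat" where
  "k21 N j = (if j = N - 1 then N + 1 else if j = N - 2 then N - 1 else j)"
definition k111 :: "nat \<Rightarrow> nat \<Rightarrow> nat" where
  "k111 N j = (if j = N - 1 then N else if j = N - 2 then N - 1 else if j = N - 3 then N - 2 else j)"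

definition "s0 N u = Dk N u (\<lambda>j. j)"
definition "s1 N u = Dk N u (k1 N)"
definition "s2 N u = Dk N u (k2 N)"
definition "s3 N u = Dk N u (k3 N)"
definition "s11 N u = (if 2 \<le> N then Dk N u (k11 N) else 0)"
definition "s21 N u = (if 2 \<le> N then Dk N u (k21 N) else 0)"
definition "s111 N u = (if 3 \<le> N then Dk N u (k111 N) else 0)"

definition SH :: "nat \<Rightarrow> (nat \<Rightarrow> nat \<Rightarrow> complex) \<Rightarrow> nat \<Rightarrow> (nat \<Rightarrow> nat) \<Rightarrow> complex" where
  "SH N u d ks = (\<Sum>j<N. Dk N u (ks(j := ks j + d)))"

lemmas kdefs = k1_def k2_def k3_def k11_def k21_def k111_def
lemmas sdefs = s0_def s1_def s2_def s3_def s11_def s21_def s111_def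

lemma Ncases:
  assumes "1 \<le> (N::nat)"
  obtains "N = 1" | "N = 2" | n where "N = Suc (Suc (Suc n))"
  using assms by (metis One_nat_def Suc_1 le_Suc_eq nat_le_real_less not0_implies_Suc not_less_eq_eq of_nat_1 of_nat_le_iff)

lemma sum3: "(\<Sum>j<Suc (Suc (Suc n)). T j) = (\<Sum>j<n. T j) + T n + T (Suc n) + T (Suc (Suc n))"
  by simp

lemma SH1_k0: assumes "1 \<le> N" shows "SH N u 1 (\<lambda>j. j) = s1 N u"
  using assms
proof (cases rule: Ncases)
  case 1 then show ?thesis by (simp add: SH_def sdefs kdefs Dv_1 Dv_1S)
next
  case 2 then show ?thesis by (simp add: SH_def sdefs kdefs Dv_2S numeral_2_eq_2)
next
  case (3 n)
  have "SH N u 1 (\<lambda>j. j) = (\<Sum>j<n. Dk N u ((\<lambda>j. j)(j := j + 1))) 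
     + Dk N u ((\<lambda>j. j)(n := n + 1)) + Dk N u ((\<lambda>j. j)(Suc n := Suc n + 1)) + Dk N u ((\<lambda>j. j)(Suc (Suc n) := Suc (Suc n) + 1))"
    unfolding SH_def 3 sum3 by simp
  also have "(\<Sum>j<n. Dk N u ((\<lambda>j. j)(j := j + 1))) = 0"
    using low_zero[of n 1 N "\<lambda>j. j" u] 3 by simp
  also have "Dk N u ((\<lambda>j. j)(n := n + 1)) = 0" by (rule Dk_0[of n N "Suc n"]) (auto simp: 3)
  also have "Dk N u ((\<lambda>j. j)(Suc n := Suc n + 1)) = 0" by (rule Dk_0[of "Suc n" N "Suc (Suc n)"]) (auto simp: 3)
  also have "Dk N u ((\<lambda>j. j)(Suc (Suc n) := Suc (Suc n) + 1)) = s1 N u"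
    unfolding s1_def by (rule Dk_eq) (auto simp: 3 k1_def)
  finally show ?thesis by simp
qed

lemma SH1_k1: assumes "1 \<le> N" shows "SH N u 1 (k1 N) = s2 N u + s11 N u"
  using assms
proof (cases rule: Ncases)
  case 1 then show ?thesis by (simp add: SH_def sdefs kdefs Dv_1 Dv_1S)
next
  case 2 then show ?thesis by (simp add: SH_def sdefs kdefs Dv_2S numeral_2_eq_2)
next
  case (3 n)
  have "SH N u 1 (k1 N) = (\<Sum>j<n. Dk N u ((k1 N)(j := k1 N j + 1))) 
     + Dk N u ((k1 N)(n := k1 N n + 1)) + Dk N u ((k1 N)(Suc n := k1 N (Suc n) + 1)) + Dk N u ((k1 N)(Suc (Suc n) := k1 N (Suc (Suc n)) + 1))"
    unfolding SH_def 3 sum3 by simp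
  also have "(\<Sum>j<n. Dk N u ((k1 N)(j := k1 N j + 1))) = 0"
    by (rule low_zero) (auto simp: 3 k1_def)
  also have "Dk N u ((k1 N)(n := k1 N n + 1)) = 0" by (rule Dk_0[of n N "Suc n"]) (auto simp: 3 k1_def)
  also have "Dk N u ((k1 N)(Suc n := k1 N (Suc n) + 1)) = s11 N u"
    unfolding s11_def using 3 by (simp, intro Dk_eq) (auto simp: 3 k1_def k11_def)
  also have "Dk N u ((k1 N)(Suc (Suc n) := k1 N (Suc (Suc n)) + 1)) = s2 N u"
    unfolding s2_def by (rule Dk_eq) (auto simp: 3 k1_def k2_def)
  finally show ?thesis by simp
qed

lemma SH1_k2: assumes "1 \<le> N" shows "SH N u 1 (k2 N) = s3 N u + s21 N u"
  using assms
proof (cases rule: Ncases)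
  case 1 then show ?thesis by (simp add: SH_def sdefs kdefs Dv_1 Dv_1S)
next
  case 2 then show ?thesis by (simp add: SH_def sdefs kdefs Dv_2S numeral_2_eq_2)
next
  case (3 n)
  have "SH N u 1 (k2 N) = (\<Sum>j<n. Dk N u ((k2 N)(j := k2 N j + 1))) 
     + Dk N u ((k2 N)(n := k2 N n + 1)) + Dk N u ((k2 N)(Suc n := k2 N (Suc n) + 1)) + Dk N u ((k2 N)(Suc (Suc n) := k2 N (Suc (Suc n)) + 1))"
    unfolding SH_def 3 sum3 by simp
  also have "(\<Sum>j<n. Dk N u ((k2 N)(j := k2 N j + 1))) = 0"
    by (rule low_zero) (auto simp: 3 k2_def)
  also have "Dk N u ((k2 N)(n := k2 N n + 1)) = 0" by (rule Dk_0[of n N "Suc n"]) (auto simp: 3 k2_def)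
  also have "Dk N u ((k2 N)(Suc n := k2 N (Suc n) + 1)) = s21 N u"
    unfolding s21_def using 3 by (simp, intro Dk_eq) (auto simp: 3 k2_def k21_def)
  also have "Dk N u ((k2 N)(Suc (Suc n) := k2 N (Suc (Suc n)) + 1)) = s3 N u"
    unfolding s3_def by (rule Dk_eq) (auto simp: 3 k2_def k3_def)
  finally show ?thesis by simp
qed

lemma SH1_k11: assumes "2 \<le> N" shows "SH N u 1 (k11 N) = s21 N u + s111 N u"
proof -
  have "1 \<le> N" using assms by simp
  then show ?thesis
  proof (cases rule: Ncases)
    case 1 then show ?thesis using assms by simp
  next
    case 2 then show ?thesis by (simp add: SH_def sdefs kdefs Dv_2S numeral_2_eq_2)
  next
    case (3 n)
    have "SH N u 1 (k11 N) = (\<Sum>j<n. Dk N u ((k11 N)(j := k11 N j + 1))) 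
       + Dk N u ((k11 N)(n := k11 N n + 1)) + Dk N u ((k11 N)(Suc n := k11 N (Suc n) + 1)) + Dk N u ((k11 N)(Suc (Suc n) := k11 N (Suc (Suc n)) + 1))"
      unfolding SH_def 3 sum3 by simp
    also have "(\<Sum>j<n. Dk N u ((k11 N)(j := k11 N j + 1))) = 0"
      by (rule low_zero) (auto simp: 3 k11_def)
    also have "Dk N u ((k11 N)(n := k11 N n + 1)) = s111 N u"
      unfolding s111_def using 3 by (simp, intro Dk_eq) (auto simp: 3 k111_def k11_def)
    also have "Dk N u ((k11 N)(Suc n := k11 N (Suc n) + 1)) = 0" 
      by (rule Dk_0[of "Suc n" N "Suc (Suc n)"]) (auto simp: 3 k11_def)
    also have "Dk N u ((k11 N)(Suc (Suc n) := k11 N (Suc (Suc n)) + 1)) = s21 N u"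
      unfolding s21_def using 3 by (simp, intro Dk_eq) (auto simp: 3 k11_def k21_def)
    finally show ?thesis by simp
  qed
qed

lemma SH3_k0: assumes "1 \<le> N" shows "SH N u 3 (\<lambda>j. j) = s3 N u - s21 N u + s111 N u"
  using assms
proof (cases rule: Ncases)
  case 1 then show ?thesis by (simp add: SH_def sdefs kdefs Dv_1 Dv_1S numeral_3_eq_3)
next
  case 2 then show ?thesis by (simp add: SH_def sdefs kdefs Dv_2S numeral_2_eq_2 eval_nat_numeral algebra_simps)
next
  case (3 n)
  have "SH N u 3 (\<lambda>j. j) = (\<Sum>j<n. Dk N u ((\<lambda>j. j)(j := j + 3))) 
     + Dk N u ((\<lambda>j. j)(n := n + 3)) + Dk N u ((\<lambda>j. j)(Suc n := Suc n + 3)) + Dk N u ((\<lambda>j. j)(Suc (Suc n) := Suc (Suc n) + 3))"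
    unfolding SH_def 3 sum3 by simp
  also have "(\<Sum>j<n. Dk N u ((\<lambda>j. j)(j := j + 3))) = 0"
    using low_zero[of n 3 N "\<lambda>j. j" u] 3 by simp
  also have "Dk N u ((\<lambda>j. j)(n := n + 3)) = s111 N u"
  proof -
    define Y where "Y = (\<lambda>k. if k = n then n + 1 else if k = Suc n then n + 3 else k)"
    have "Dk N u ((\<lambda>j. j)(n := n + 3)) = - Dk N u Y"
      by (rule Dk_neg[of n N "Suc n"]) (auto simp: 3 Y_def)
    also have "Dk N u Y = - Dk N u (k111 N)"
      by (rule Dk_neg[of "Suc n" N "Suc (Suc n)"]) (auto simp: 3 Y_def k111_def)
    finally show ?thesis using 3 by (simp add: s111_def)
  qed
  also have "Dk N u ((\<lambda>j. j)(Suc n := Suc n + 3)) = - s21 N u"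
  proof -
    have "s21 N u = Dk N u (k21 N)" using 3 by (simp add: s21_def)
    moreover have "Dk N u ((\<lambda>j. j)(Suc n := Suc n + 3)) = - Dk N u (k21 N)"
      by (rule Dk_neg[of "Suc n" N "Suc (Suc n)"]) (auto simp: 3 k21_def)
    ultimately show ?thesis by simp
  qed
  also have "Dk N u ((\<lambda>j. j)(Suc (Suc n) := Suc (Suc n) + 3)) = s3 N u"
    unfolding s3_def by (rule Dk_eq) (auto simp: 3 k3_def)
  finally show ?thesis by simp
qed

lemma SH2_k0: assumes "1 \<le> N" shows "SH N u 2 (\<lambda>j. j) = s2 N u - s11 N u"
  using assms
proof (cases rule: Ncases)
  case 1 then show ?thesis by (simp add: SH_def sdefs kdefs Dv_1 Dv_1S)
next
  case 2 then show ?thesis by (simp add: SH_def sdefs kdefs Dv_2S numeral_2_eq_2)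
next
  case (3 n)
  have "SH N u 2 (\<lambda>j. j) = (\<Sum>j<n. Dk N u ((\<lambda>j. j)(j := j + 2))) 
     + Dk N u ((\<lambda>j. j)(n := n + 2)) + Dk N u ((\<lambda>j. j)(Suc n := Suc n + 2)) + Dk N u ((\<lambda>j. j)(Suc (Suc n) := Suc (Suc n) + 2))"
    unfolding SH_def 3 sum3 by simp
  also have "(\<Sum>j<n. Dk N u ((\<lambda>j. j)(j := j + 2))) = 0"
    using low_zero[of n 2 N "\<lambda>j. j" u] 3 by simp
  also have "Dk N u ((\<lambda>j. j)(n := n + 2)) = 0"
    by (rule Dk_0[of n N "Suc (Suc n)"]) (auto simp: 3)
  also have "Dk N u ((\<lambda>j. j)(Suc n := Suc n + 2)) = - s11 N u"
  proof -
    have "s11 N u = Dk N u (k11 N)" using 3 by (simp add: s11_def)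
    moreover have "Dk N u ((\<lambda>j. j)(Suc n := Suc n + 2)) = - Dk N u (k11 N)"
      by (rule Dk_neg[of "Suc n" N "Suc (Suc n)"]) (auto simp: 3 k11_def)
    ultimately show ?thesis by simp
  qed
  also have "Dk N u ((\<lambda>j. j)(Suc (Suc n) := Suc (Suc n) + 2)) = s2 N u"
    unfolding s2_def by (rule Dk_eq) (auto simp: 3 k2_def)
  finally show ?thesis by simp
qed

lemma SH2_k1: assumes "1 \<le> N" shows "SH N u 2 (k1 N) = s3 N u - s111 N u"
  using assms
proof (cases rule: Ncases)
  case 1 then show ?thesis by (simp add: SH_def sdefs kdefs Dv_1 Dv_1S)
next
  case 2 then show ?thesis by (simp add: SH_def sdefs kdefs Dv_2S numeral_2_eq_2)
next
  case (3 n)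
  have "SH N u 2 (k1 N) = (\<Sum>j<n. Dk N u ((k1 N)(j := k1 N j + 2))) 
     + Dk N u ((k1 N)(n := k1 N n + 2)) + Dk N u ((k1 N)(Suc n := k1 N (Suc n) + 2)) + Dk N u ((k1 N)(Suc (Suc n) := k1 N (Suc (Suc n)) + 2))"
    unfolding SH_def 3 sum3 by simp
  also have "(\<Sum>j<n. Dk N u ((k1 N)(j := k1 N j + 2))) = 0"
    by (rule low_zero) (auto simp: 3 k1_def)
  also have "Dk N u ((k1 N)(n := k1 N n + 2)) = - s111 N u"
  proof -
    have "s111 N u = Dk N u (k111 N)" using 3 by (simp add: s111_def)
    moreover have "Dk N u ((k1 N)(n := k1 N n + 2)) = - Dk N u (k111 N)"
      by (rule Dk_neg[of n N "Suc n"]) (auto simp: 3 k1_def k111_def)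
    ultimately show ?thesis by simp
  qed
  also have "Dk N u ((k1 N)(Suc n := k1 N (Suc n) + 2)) = 0"
    by (rule Dk_0[of "Suc n" N "Suc (Suc n)"]) (auto simp: 3 k1_def)
  also have "Dk N u ((k1 N)(Suc (Suc n) := k1 N (Suc (Suc n)) + 2)) = s3 N u"
    unfolding s3_def by (rule Dk_eq) (auto simp: 3 k1_def k3_def)
  finally show ?thesis by simp
qed

lemma SH2_trace:
  assumes A: "A \<in> carrier_mat N N"
    and rec: "\<And>k i. i < N \<Longrightarrow> u (k + 2) i = (\<Sum>l<N. A $$ (i,l) * u k l)"
  shows "SH N u 2 ks = (\<Sum>i<N. A $$ (i,i)) * Dk N u ks"
proof -
  have "SH N u 2 ks = (\<Sum>j<N. Dv N ((\<lambda>j. u (ks j))(j := (\<lambda>i. \<Sum>l<N. A $$ (i,l) * (\<lambda>j. u (ks j)) j l))))"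
    unfolding SH_def by (intro sum.cong refl Dv_cong) (auto simp: rec[of _ "ks _", simplified])
  also have "\<dots> = (\<Sum>i<N. A $$ (i,i)) * Dk N u ks" by (rule Dv_trace[OF A])
  finally show ?thesis .
qed




lemma Dv_neg: assumes "i < N" "j < N" "i \<noteq> j"
  and "\<And>k r. k < N \<Longrightarrow> r < N \<Longrightarrow> cs' k r = (if k = i then cs j r else if k = j then cs i r else cs k r)"
  shows "Dv N cs' = - Dv N cs"
proof -
  have "Dv N cs' = Dv N (\<lambda>k. if k = i then cs j else if k = j then cs i else cs k)"
    by (rule Dv_cong) (auto simp: assms(4))
  also have "\<dots> = - Dv N cs" by (rule Dv_swap[OF assms(1-3)])
  finally show ?thesis .
qed

lemma P1gen:
  assumes N: "2 \<le> N" 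
  shows "Dv N (\<lambda>j. if j < N - 2 then u (Suc j) else if j = N - 2 then u N else u c)
         * Dv N (\<lambda>j. if j < N - 1 then u j else u (N - 1))
       - Dv N (\<lambda>j. if j < N - 2 then u (Suc j) else if j = N - 2 then u (N - 1) else u c)
         * Dv N (\<lambda>j. if j < N - 1 then u j else u N)
       + Dv N (\<lambda>j. if j < N - 2 then u (Suc j) else if j = N - 2 then u (N - 1) else u N)
         * Dv N (\<lambda>j. if j < N - 1 then u j else u c) = 0"
  by (rule plucker[OF N]) (auto intro!: exI[of _ "Suc _"])

lemma P1: assumes "1 \<le> N"
  shows "s11 N (\<lambda>k. u (Suc k)) * s0 N u - s1 N (\<lambda>k. u (Suc k)) * s1 N u + s0 N (\<lambda>k. u (Suc k)) * s2 N u = 0"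
proof (cases "N = 1")
  case True then show ?thesis by (simp add: sdefs kdefs Dv_1S)
next
  case False
  then have N: "2 \<le> N" using assms by simp
  obtain n where n: "N = Suc (Suc n)" using N by (metis add_2_eq_Suc le_Suc_ex)
  have e1: "s11 N (\<lambda>k. u (Suc k)) = Dv N (\<lambda>j. if j < N - 2 then u (Suc j) else if j = N - 2 then u N else u (N + 1))"
    using N by (simp add: s11_def, intro Dv_cong) (auto simp: k11_def n less_Suc_eq)
  have e2: "s0 N u = Dv N (\<lambda>j. if j < N - 1 then u j else u (N - 1))"
    unfolding s0_def by (intro Dv_cong, rename_tac i j, case_tac "j = N - 1") auto
  have e3: "s1 N (\<lambda>k. u (Suc k)) = Dv N (\<lambda>j. if j < N - 2 then u (Suc j) else if j = N - 2 then u (N - 1) else u (N + 1))"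
    unfolding s1_def by (intro Dv_cong) (auto simp: k1_def n less_Suc_eq)
  have e4: "s1 N u = Dv N (\<lambda>j. if j < N - 1 then u j else u N)"
    unfolding s1_def by (intro Dv_cong) (auto simp: k1_def n less_Suc_eq)
  have e5: "s0 N (\<lambda>k. u (Suc k)) = Dv N (\<lambda>j. if j < N - 2 then u (Suc j) else if j = N - 2 then u (N - 1) else u N)"
    unfolding s0_def by (intro Dv_cong) (auto simp: n less_Suc_eq)
  have e6: "s2 N u = Dv N (\<lambda>j. if j < N - 1 then u j else u (N + 1))"
    unfolding s2_def by (intro Dv_cong) (auto simp: k2_def n less_Suc_eq)
  show ?thesis unfolding e1 e2 e3 e4 e5 e6 by (rule P1gen[OF N])
qed

lemma P1': assumes "1 \<le> N"
  shows "s21 N (\<lambda>k. u (Suc k)) * s0 N u - s2 N (\<lambda>k. u (Suc k)) * s1 N u + s0 N (\<lambda>k. u (Suc k)) * s3 N u = 0"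
proof (cases "N = 1")
  case True then show ?thesis by (simp add: sdefs kdefs Dv_1S)
next
  case False
  then have N: "2 \<le> N" using assms by simp
  obtain n where n: "N = Suc (Suc n)" using N by (metis add_2_eq_Suc le_Suc_ex)
  have e1: "s21 N (\<lambda>k. u (Suc k)) = Dv N (\<lambda>j. if j < N - 2 then u (Suc j) else if j = N - 2 then u N else u (N + 2))"
    using N by (simp add: s21_def, intro Dv_cong) (auto simp: k21_def n less_Suc_eq)
  have e2: "s0 N u = Dv N (\<lambda>j. if j < N - 1 then u j else u (N - 1))"
    unfolding s0_def by (intro Dv_cong, rename_tac i j, case_tac "j = N - 1") auto
  have e3: "s2 N (\<lambda>k. u (Suc k)) = Dv N (\<lambda>j. if j < N - 2 then u (Suc j) else if j = N - 2 then u (N - 1) else u (N + 2))"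
    unfolding s2_def by (intro Dv_cong) (auto simp: k2_def n less_Suc_eq)
  have e4: "s1 N u = Dv N (\<lambda>j. if j < N - 1 then u j else u N)"
    unfolding s1_def by (intro Dv_cong) (auto simp: k1_def n less_Suc_eq)
  have e5: "s0 N (\<lambda>k. u (Suc k)) = Dv N (\<lambda>j. if j < N - 2 then u (Suc j) else if j = N - 2 then u (N - 1) else u N)"
    unfolding s0_def by (intro Dv_cong) (auto simp: n less_Suc_eq)
  have e6: "s3 N u = Dv N (\<lambda>j. if j < N - 1 then u j else u (N + 2))"
    unfolding s3_def by (intro Dv_cong) (auto simp: k3_def n less_Suc_eq)
  show ?thesis unfolding e1 e2 e3 e4 e5 e6 by (rule P1gen[OF N])
qed

lemma P2: assumes "1 \<le> N"
  shows "s111 N (\<lambda>k. u (Suc k)) * s0 N u - s1 N (\<lambda>k. u (Suc k)) * s11 N u + s0 N (\<lambda>k. u (Suc k)) * s21 N u = 0"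
  using assms
proof (cases rule: Ncases)
  case 1 then show ?thesis by (simp add: sdefs)
next
  case 2 then show ?thesis by (simp add: sdefs kdefs Dv_2S numeral_2_eq_2 algebra_simps)
next
  case (3 n)
  have N: "2 \<le> N" using 3 by simp
  define q where "q = (\<lambda>j. if j < N - 3 then u (Suc j) else u (N - 1))"
  define r where "r = (\<lambda>j. if j < N - 2 then u j else u (N - 1))"
  have pl: "Dv N (\<lambda>j. if j < N - 2 then q j else if j = N - 2 then u N else u (N + 1))
         * Dv N (\<lambda>j. if j < N - 1 then r j else u (N - 2))
       - Dv N (\<lambda>j. if j < N - 2 then q j else if j = N - 2 then u (N - 2) else u (N + 1))
         * Dv N (\<lambda>j. if j < N - 1 then r j else u N)
       + Dv N (\<lambda>j. if j < N - 2 then q j else if j = N - 2 then u (N - 2) else u N)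
         * Dv N (\<lambda>j. if j < N - 1 then r j else u (N + 1)) = 0"
  proof (rule plucker[OF N])
    fix i assume i: "i < N - 2"
    show "\<exists>p<N - 1. r p = q i"
    proof (cases "i < N - 3")
      case True then show ?thesis by (intro exI[of _ "Suc i"]) (auto simp: q_def r_def 3)
    next
      case False then show ?thesis using i by (intro exI[of _ "N - 2"]) (auto simp: q_def r_def 3)
    qed
  qed
  have e1: "Dv N (\<lambda>j. if j < N - 2 then q j else if j = N - 2 then u N else u (N + 1)) = s111 N (\<lambda>k. u (Suc k))"
    using 3 by (simp add: s111_def, intro Dv_cong) (auto simp: k111_def q_def)
  have e2: "Dv N (\<lambda>j. if j < N - 1 then r j else u (N - 2)) = - s0 N u"
    unfolding s0_def by (rule Dv_neg[of "Suc n" N "Suc (Suc n)"]) (auto simp: 3 r_def)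
  have e3: "Dv N (\<lambda>j. if j < N - 2 then q j else if j = N - 2 then u (N - 2) else u (N + 1)) = - s1 N (\<lambda>k. u (Suc k))"
    unfolding s1_def by (rule Dv_neg[of n N "Suc n"]) (auto simp: 3 q_def k1_def less_Suc_eq)
  have e4: "Dv N (\<lambda>j. if j < N - 1 then r j else u N) = s11 N u"
    using 3 by (simp add: s11_def, intro Dv_cong) (auto simp: k11_def r_def)
  have e5: "Dv N (\<lambda>j. if j < N - 2 then q j else if j = N - 2 then u (N - 2) else u N) = - s0 N (\<lambda>k. u (Suc k))"
    unfolding s0_def by (rule Dv_neg[of n N "Suc n"]) (auto simp: 3 q_def less_Suc_eq)
  have e6: "Dv N (\<lambda>j. if j < N - 1 then r j else u (N + 1)) = s21 N u"
    using 3 by (simp add: s21_def, intro Dv_cong) (auto simp: k21_def r_def)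
  from pl show ?thesis unfolding e1 e2 e3 e4 e5 e6 by (simp add: algebra_simps)
qed




lemma hvd_prod:
  fixes f :: "nat \<Rightarrow> real \<Rightarrow> complex"
  assumes "\<And>i. i \<in> I \<Longrightarrow> (f i has_vector_derivative f' i) (at z)"
  shows "((\<lambda>y. \<Prod>i\<in>I. f i y) has_vector_derivative (\<Sum>i\<in>I. f' i * (\<Prod>j\<in>I - {i}. f j z))) (at z)"
proof -
  have "((\<lambda>y. \<Prod>i\<in>I. f i y) has_derivative (\<lambda>h. \<Sum>i\<in>I. (h *\<^sub>R f' i) * (\<Prod>j\<in>I - {i}. f j z))) (at z)"
    by (rule has_derivative_prod) (use assms in \<open>auto simp: has_vector_derivative_def\<close>)
  then show ?thesis unfolding has_vector_derivative_def
    by (rule has_derivative_eq_rhs) (auto simp: fun_eq_iff scaleR_sum_right)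
qed

lemma det_vd:
  fixes M :: "real \<Rightarrow> nat \<Rightarrow> nat \<Rightarrow> complex"
  assumes "\<And>i j. i < n \<Longrightarrow> j < n \<Longrightarrow> ((\<lambda>y. M y i j) has_vector_derivative M' i j) (at z)"
  shows "((\<lambda>y. det (mat n n (\<lambda>(i,j). M y i j))) has_vector_derivative
           (\<Sum>c<n. det (mat n n (\<lambda>(i,j). if j = c then M' i j else M z i j)))) (at z)"
proof -
  let ?P = "{p. p permutes {0..<n}}"
  have eq: "(\<lambda>y. det (mat n n (\<lambda>(i,j). M y i j))) = (\<lambda>y. \<Sum>p\<in>?P. signof p * (\<Prod>i = 0..<n. M y i (p i)))"
    by (rule ext, subst det_def'[of _ n]) (auto intro!: sum.cong prod.cong simp: permutes_def)
  have pin: "p i < n" if "p permutes {0..<n}" "i < n" for p i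
    using that permutes_in_image by fastforce
  have D: "((\<lambda>y. \<Sum>p\<in>?P. signof p * (\<Prod>i = 0..<n. M y i (p i))) has_vector_derivative
     (\<Sum>p\<in>?P. signof p * (\<Sum>i\<in>{0..<n}. M' i (p i) * (\<Prod>j\<in>{0..<n} - {i}. M z j (p j))))) (at z)"
    by (intro has_vector_derivative_sum has_vector_derivative_mult_right hvd_prod)
       (use assms pin in auto)
  have R: "(\<Sum>c<n. det (mat n n (\<lambda>(i,j). if j = c then M' i j else M z i j)))
     = (\<Sum>p\<in>?P. signof p * (\<Sum>i\<in>{0..<n}. M' i (p i) * (\<Prod>j\<in>{0..<n} - {i}. M z j (p j))))"
  proof -
    have "(\<Sum>c<n. det (mat n n (\<lambda>(i,j). if j = c then M' i j else M z i j)))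
       = (\<Sum>c<n. \<Sum>p\<in>?P. signof p * (\<Prod>i = 0..<n. (if p i = c then M' i (p i) else M z i (p i))))"
      by (intro sum.cong refl, subst det_def'[of _ n]) (auto intro!: sum.cong prod.cong simp: pin)
    also have "\<dots> = (\<Sum>p\<in>?P. signof p * (\<Sum>c<n. (\<Prod>i = 0..<n. (if p i = c then M' i (p i) else M z i (p i)))))"
      by (subst sum.swap) (simp add: sum_distrib_left)
    also have "\<dots> = (\<Sum>p\<in>?P. signof p * (\<Sum>i\<in>{0..<n}. M' i (p i) * (\<Prod>j\<in>{0..<n} - {i}. M z j (p j))))"
    proof (rule sum.cong[OF refl])
      fix p assume "p \<in> ?P"
      then have p: "p permutes {0..<n}" by simp
      have bij: "bij_betw p {0..<n} {0..<n}" using permutes_imp_bij[OF p] .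
      have "(\<Sum>c<n. (\<Prod>i = 0..<n. (if p i = c then M' i (p i) else M z i (p i))))
          = (\<Sum>c\<in>{0..<n}. (\<Prod>i = 0..<n. (if p i = c then M' i (p i) else M z i (p i))))"
        by (simp add: lessThan_atLeast0)
      also have "\<dots> = (\<Sum>k\<in>{0..<n}. (\<Prod>i = 0..<n. (if p i = p k then M' i (p i) else M z i (p i))))"
        by (rule sum.reindex_bij_betw[OF bij, symmetric])
      also have "\<dots> = (\<Sum>k\<in>{0..<n}. M' k (p k) * (\<Prod>j\<in>{0..<n} - {k}. M z j (p j)))"
      proof (rule sum.cong[OF refl])
        fix k assume k: "k \<in> {0..<n}"
        have "(\<Prod>i = 0..<n. (if p i = p k then M' i (p i) else M z i (p i)))
           = (if p k = p k then M' k (p k) else M z k (p k)) * (\<Prod>i\<in>{0..<n} - {k}. (if p i = p k then M' i (p i) else M z i (p i)))"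
          by (rule prod.remove) (use k in auto)
        also have "(\<Prod>i\<in>{0..<n} - {k}. (if p i = p k then M' i (p i) else M z i (p i))) = (\<Prod>j\<in>{0..<n} - {k}. M z j (p j))"
        proof (rule prod.cong[OF refl])
          fix i assume i: "i \<in> {0..<n} - {k}"
          have "p i \<noteq> p k" using i k permutes_inj[OF p] by (auto dest: injD)
          then show "(if p i = p k then M' i (p i) else M z i (p i)) = M z i (p i)" by simp
        qed
        finally show "(\<Prod>i = 0..<n. (if p i = p k then M' i (p i) else M z i (p i))) = M' k (p k) * (\<Prod>j\<in>{0..<n} - {k}. M z j (p j))" by simp
      qed
      finally show "signof p * (\<Sum>c<n. (\<Prod>i = 0..<n. (if p i = c then M' i (p i) else M z i (p i))))
         = signof p * (\<Sum>i\<in>{0..<n}. M' i (p i) * (\<Prod>j\<in>{0..<n} - {i}. M z j (p j)))" by simp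
    qed
    finally show ?thesis .
  qed
  show ?thesis unfolding eq R by (rule D)
qed




lemma pder_rep: "pder (replicate k False) g = (px ^^ k) g"
  by (induction k) auto

lemma px_eq: "((\<lambda>y. g y t) has_vector_derivative d) (at x) \<Longrightarrow> px g x t = d"
  by (simp add: px_def vector_derivative_at)

lemma pt_eq: "((\<lambda>s. g x s) has_vector_derivative d) (at t) \<Longrightarrow> pt g x t = d"
  by (simp add: pt_def vector_derivative_at)

lemma px_pow2: "(px ^^ 2) g = px (px g)" by (simp add: eval_nat_numeral)
lemma px_pow3: "(px ^^ 3) g = px (px (px g))" by (simp add: eval_nat_numeral)

lemma final_alg:
  fixes s0 s1 s2 s3 s11 s21 s111 t0 t1 t2 t3 t11 t21 t111 a c :: complex
  assumes "s2 - s11 = a * s0" "s3 - s111 = a * s1" "t2 - t11 = a * t0" "t3 - t111 = a * t1"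
   "t11 * s0 - t1 * s1 + t0 * s2 = 0" "t21 * s0 - t2 * s1 + t0 * s3 = 0" "t111 * s0 - t1 * s11 + t0 * s21 = 0"
  shows "(c * (-4 * (t3 - t21 + t111)))  *  s0 - (c * t0)  *  (-4 * (s3 - s21 + s111)) + ((c * (t3 + t21 + (t21 + t111)))  *  s0 - 3 * (c * (t2+t11)) * s1 + 3 * (c * t1) * (s2+s11) - (c * t0) * (s3 + s21 + (s21 + s111))) = 0"
    and "(c * (t2+t11)) * s0 - 2 * (c * t1) * s1 + (c * t0) * (s2+s11) = 0"
proof -
  have s2: "s2 = s11 + a * s0" and s3: "s3 = s111 + a * s1" and t2: "t2 = t11 + a * t0" and t3: "t3 = t111 + a * t1"
    using assms(1-4) by (simp_all add: algebra_simps)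
  have p1: "t11 * s0 - t1 * s1 + t0 * (s11 + a * s0) = 0" using assms(5) s2 by simp
  have p1': "t21 * s0 - (t11 + a * t0) * s1 + t0 * (s111 + a * s1) = 0" using assms(6) s3 t2 by simp
  have p2: "t111 * s0 - t1 * s11 + t0 * s21 = 0" by fact
  show "(c * (-4 * (t3 - t21 + t111)))  *  s0 - (c * t0)  *  (-4 * (s3 - s21 + s111)) + ((c * (t3 + t21 + (t21 + t111)))  *  s0 - 3 * (c * (t2+t11)) * s1 + 3 * (c * t1) * (s2+s11) - (c * t0) * (s3 + s21 + (s21 + s111))) = 0"
  proof -
    have "(c * (-4 * (t3 - t21 + t111)))  *  s0 - (c * t0)  *  (-4 * (s3 - s21 + s111)) + ((c * (t3 + t21 + (t21 + t111)))  *  s0 - 3 * (c * (t2+t11)) * s1 + 3 * (c * t1) * (s2+s11) - (c * t0) * (s3 + s21 + (s21 + s111)))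
      = 6 * c * (t21 * s0 - (t11 + a * t0) * s1 + t0 * (s111 + a * s1)) - 6 * c * (t111 * s0 - t1 * s11 + t0 * s21)"
      unfolding s2 s3 t2 t3 by (simp add: algebra_simps)
    then show ?thesis using p1' p2 by simp
  qed
  show "(c * (t2+t11)) * s0 - 2 * (c * t1) * s1 + (c * t0) * (s2+s11) = 0"
  proof -
    have "(c * (t2+t11)) * s0 - 2 * (c * t1) * s1 + (c * t0) * (s2+s11) = 2 * c * (t11 * s0 - t1 * s1 + t0 * (s11 + a * s0))"
      unfolding s2 t2 by (simp add: algebra_simps)
    then show ?thesis using p1 by simp
  qed
qed

locale wsetup =
  fixes N :: nat and A B :: "complex mat" and \<phi> :: "nat \<Rightarrow> real \<Rightarrow> real \<Rightarrow> complex"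
  assumes N1: "N \<ge> 1" and Ac: "A \<in> carrier_mat N N" and Bc: "B \<in> carrier_mat N N"
  and sm: "\<And>i. i < N \<Longrightarrow> smooth2 (\<phi> i)"
  and hA: "\<And>i x t. i < N \<Longrightarrow> (px ^^ 2) (\<phi> i) x t = (\<Sum>j<N. A $$ (i, j) * \<phi> j x t)"
  and hB: "\<And>i x t. i < N \<Longrightarrow> px (\<phi> i) x t = (\<Sum>j<N. B $$ (i, j) * cnj (\<phi> j x t))"
  and hT: "\<And>i x t. i < N \<Longrightarrow> pt (\<phi> i) x t = - 4 * (px ^^ 3) (\<phi> i) x t"
begin

lemma dx: "i < N \<Longrightarrow> ((\<lambda>y. (px ^^ k) (\<phi> i) y t) has_vector_derivative (px ^^ Suc k) (\<phi> i) x t) (at x)"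
proof -
  assume i: "i < N"
  have "(\<lambda>y. pder (replicate k False) (\<phi> i) y t) differentiable (at x)"
    using sm[OF i] unfolding smooth2_def by blast
  then have "((\<lambda>y. (px ^^ k) (\<phi> i) y t) has_vector_derivative vector_derivative (\<lambda>y. (px ^^ k) (\<phi> i) y t) (at x)) (at x)"
    unfolding pder_rep vector_derivative_works .
  then show ?thesis by (simp add: px_def)
qed

lemma dt: "i < N \<Longrightarrow> ((\<lambda>s. (px ^^ k) (\<phi> i) x s) has_vector_derivative pt ((px ^^ k) (\<phi> i)) x t) (at t)"
proof -
  assume i: "i < N"
  have "(\<lambda>s. pder (replicate k False) (\<phi> i) x s) differentiable (at t)"
    using sm[OF i] unfolding smooth2_def by blast
  then show ?thesis unfolding pder_rep vector_derivative_works pt_def .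
qed

lemma rel2: "i < N \<Longrightarrow> (px ^^ (k + 2)) (\<phi> i) x t = (\<Sum>l<N. A $$ (i, l) * (px ^^ k) (\<phi> l) x t)"
proof (induction k arbitrary: i x t)
  case 0 then show ?case using hA[of i x t] by (simp add: px_pow2)
next
  case (Suc k)
  have fe: "(px ^^ (k + 2)) (\<phi> i) = (\<lambda>x t. \<Sum>l<N. A $$ (i, l) * (px ^^ k) (\<phi> l) x t)"
    using Suc.IH[OF Suc.prems] by (intro ext) simp
  have "(px ^^ (Suc k + 2)) (\<phi> i) x t = px ((px ^^ (k + 2)) (\<phi> i)) x t" by simp
  also have "\<dots> = (\<Sum>l<N. A $$ (i, l) * (px ^^ Suc k) (\<phi> l) x t)"
    unfolding fe by (rule px_eq, intro has_vector_derivative_sum has_vector_derivative_mult_right dx) simp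
  finally show ?case .
qed

lemma rel1: "i < N \<Longrightarrow> (px ^^ (k + 1)) (\<phi> i) x t = (\<Sum>l<N. B $$ (i, l) * cnj ((px ^^ k) (\<phi> l) x t))"
proof (induction k arbitrary: i x t)
  case 0 then show ?case using hB by simp
next
  case (Suc k)
  have fe: "(px ^^ (k + 1)) (\<phi> i) = (\<lambda>x t. \<Sum>l<N. B $$ (i, l) * cnj ((px ^^ k) (\<phi> l) x t))"
    using Suc.IH[OF Suc.prems] by (intro ext) simp
  have "(px ^^ (Suc k + 1)) (\<phi> i) x t = px ((px ^^ (k + 1)) (\<phi> i)) x t" by simp
  also have "\<dots> = (\<Sum>l<N. B $$ (i, l) * cnj ((px ^^ Suc k) (\<phi> l) x t))"
    unfolding fe by (rule px_eq, intro has_vector_derivative_sum has_vector_derivative_mult_right has_vector_derivative_cnj dx) simp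
  finally show ?case .
qed

lemma ptk: "i < N \<Longrightarrow> pt ((px ^^ k) (\<phi> i)) x t = - 4 * (px ^^ (k + 3)) (\<phi> i) x t"
proof (induction k arbitrary: i x t rule: less_induct)
  case (less k)
  consider "k = 0" | "k = 1" | m where "k = Suc (Suc m)" by (metis One_nat_def not0_implies_Suc)
  then show ?case
  proof cases
    case 1 then show ?thesis using hT[OF less.prems] by simp
  next
    case 2
    have fe: "(px ^^ k) (\<phi> i) = (\<lambda>x t. \<Sum>l<N. B $$ (i, l) * cnj (\<phi> l x t))"
      using rel1[OF less.prems, of 0] 2 by (intro ext) simp
    have "pt ((px ^^ k) (\<phi> i)) x t = (\<Sum>l<N. B $$ (i, l) * cnj (pt ((px ^^ 0) (\<phi> l)) x t))"
      unfolding fe by (rule pt_eq, intro has_vector_derivative_sum has_vector_derivative_mult_right has_vector_derivative_cnj)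
        (use dt[of _ 0] in simp)
    also have "\<dots> = (\<Sum>l<N. B $$ (i, l) * cnj (- 4 * (px ^^ 3) (\<phi> l) x t))"
      by (intro sum.cong refl) (simp add: hT)
    also have "\<dots> = - 4 * (\<Sum>l<N. B $$ (i, l) * cnj ((px ^^ 3) (\<phi> l) x t))"
      by (simp add: sum_distrib_left mult_ac)
    also have "\<dots> = - 4 * (px ^^ (k + 3)) (\<phi> i) x t"
      using rel1[OF less.prems, of 3] 2 by simp
    finally show ?thesis .
  next
    case 3
    have fe: "(px ^^ k) (\<phi> i) = (\<lambda>x t. \<Sum>l<N. A $$ (i, l) * (px ^^ m) (\<phi> l) x t)"
      using rel2[OF less.prems, of m] 3 by (intro ext) (simp add: add_2_eq_Suc')
    have "pt ((px ^^ k) (\<phi> i)) x t = (\<Sum>l<N. A $$ (i, l) * pt ((px ^^ m) (\<phi> l)) x t)"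
      unfolding fe by (rule pt_eq, intro has_vector_derivative_sum has_vector_derivative_mult_right dt) simp
    also have "\<dots> = (\<Sum>l<N. A $$ (i, l) * (- 4 * (px ^^ (m + 3)) (\<phi> l) x t))"
      by (intro sum.cong refl) (simp add: less.IH 3)
    also have "\<dots> = - 4 * (\<Sum>l<N. A $$ (i, l) * (px ^^ (m + 3)) (\<phi> l) x t)"
      by (simp add: sum_distrib_left mult_ac)
    also have "\<dots> = - 4 * (px ^^ (k + 3)) (\<phi> i) x t"
      using rel2[OF less.prems, of "m + 3"] 3 by (simp add: add_2_eq_Suc')
    finally show ?thesis .
  qed
qed

definition U :: "nat \<Rightarrow> real \<Rightarrow> real \<Rightarrow> nat \<Rightarrow> nat \<Rightarrow> complex" where
  "U m x t = (\<lambda>k i. (px ^^ (k + m)) (\<phi> i) x t)"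

lemma Wx: "((\<lambda>y. Dk N (U m y t) ks) has_vector_derivative SH N (U m x t) 1 ks) (at x)"
proof -
  have "((\<lambda>y. det (mat N N (\<lambda>(i,j). (px ^^ (ks j + m)) (\<phi> i) y t))) has_vector_derivative
     (\<Sum>c<N. det (mat N N (\<lambda>(i,j). if j = c then (px ^^ Suc (ks j + m)) (\<phi> i) x t else (px ^^ (ks j + m)) (\<phi> i) x t)))) (at x)"
    by (rule det_vd) (rule dx)
  moreover have "(\<Sum>c<N. det (mat N N (\<lambda>(i,j). if j = c then (px ^^ Suc (ks j + m)) (\<phi> i) x t else (px ^^ (ks j + m)) (\<phi> i) x t)))
     = SH N (U m x t) 1 ks"
    unfolding SH_def Dv_def U_def by (intro sum.cong refl arg_cong[of _ _ det] eq_matI) auto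
  moreover have "(\<lambda>y. det (mat N N (\<lambda>(i,j). (px ^^ (ks j + m)) (\<phi> i) y t))) = (\<lambda>y. Dk N (U m y t) ks)"
    unfolding Dv_def U_def by (intro ext arg_cong[of _ _ det] eq_matI) auto
  ultimately show ?thesis by simp
qed

lemma Dv_scale: "c < N \<Longrightarrow> Dv N (cs(c := (\<lambda>i. a * w i))) = a * Dv N (cs(c := w))"
  by (simp add: Dv_col sum_distrib_left mult_ac)

lemma Wt: "((\<lambda>s. Dk N (U m x s) ks) has_vector_derivative - 4 * SH N (U m x t) 3 ks) (at t)"
proof -
  have "((\<lambda>s. det (mat N N (\<lambda>(i,j). (px ^^ (ks j + m)) (\<phi> i) x s))) has_vector_derivative
     (\<Sum>c<N. det (mat N N (\<lambda>(i,j). if j = c then - 4 * (px ^^ (ks j + m + 3)) (\<phi> i) x t else (px ^^ (ks j + m)) (\<phi> i) x t)))) (at t)"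
    by (rule det_vd) (metis dt ptk)
  moreover have "(\<Sum>c<N. det (mat N N (\<lambda>(i,j). if j = c then - 4 * (px ^^ (ks j + m + 3)) (\<phi> i) x t else (px ^^ (ks j + m)) (\<phi> i) x t)))
     = - 4 * SH N (U m x t) 3 ks"
  proof -
    have "(\<Sum>c<N. det (mat N N (\<lambda>(i,j). if j = c then - 4 * (px ^^ (ks j + m + 3)) (\<phi> i) x t else (px ^^ (ks j + m)) (\<phi> i) x t)))
      = (\<Sum>c<N. Dv N ((\<lambda>j. U m x t (ks j))(c := (\<lambda>i. (- 4) * U m x t (ks c + 3) i))))"
      unfolding Dv_def U_def by (intro sum.cong refl arg_cong[of _ _ det] eq_matI) (auto simp: ac_simps)
    also have "\<dots> = (\<Sum>c<N. (- 4) * Dv N ((\<lambda>j. U m x t (ks j))(c := U m x t (ks c + 3))))"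
      by (intro sum.cong refl Dv_scale) simp
    also have "\<dots> = - 4 * SH N (U m x t) 3 ks"
      unfolding SH_def sum_distrib_left by (intro sum.cong refl arg_cong[of _ _ "\<lambda>z. - 4 * z"] Dv_cong) auto
    finally show ?thesis .
  qed
  moreover have "(\<lambda>s. det (mat N N (\<lambda>(i,j). (px ^^ (ks j + m)) (\<phi> i) x s))) = (\<lambda>s. Dk N (U m x s) ks)"
    unfolding Dv_def U_def by (intro ext arg_cong[of _ _ det] eq_matI) auto
  ultimately show ?thesis by simp
qed

lemma Urec: "i < N \<Longrightarrow> U m x t (k + 2) i = (\<Sum>l<N. A $$ (i,l) * U m x t k l)"
  unfolding U_def using rel2[of i "k + m" x t] by (simp add: ac_simps)

abbreviation "tr \<equiv> (\<Sum>i<N. A $$ (i,i))"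

lemma trace0: "s2 N (U m x t) - s11 N (U m x t) = tr * s0 N (U m x t)"
proof -
  have "SH N (U m x t) 2 (\<lambda>j. j) = tr * Dk N (U m x t) (\<lambda>j. j)"
    by (rule SH2_trace[OF Ac]) (rule Urec)
  then show ?thesis using SH2_k0[OF N1, of "U m x t"] by (simp add: s0_def)
qed

lemma trace1: "s3 N (U m x t) - s111 N (U m x t) = tr * s1 N (U m x t)"
proof -
  have "SH N (U m x t) 2 (k1 N) = tr * Dk N (U m x t) (k1 N)"
    by (rule SH2_trace[OF Ac]) (rule Urec)
  then show ?thesis using SH2_k1[OF N1, of "U m x t"] by (simp add: s1_def)
qed

lemma d_s0: "((\<lambda>y. s0 N (U m y t)) has_vector_derivative s1 N (U m x t)) (at x)"
  using Wx[of m t "\<lambda>j. j" x] SH1_k0[OF N1] by (simp add: s0_def)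

lemma d_s1: "((\<lambda>y. s1 N (U m y t)) has_vector_derivative s2 N (U m x t) + s11 N (U m x t)) (at x)"
  using Wx[of m t "k1 N" x] SH1_k1[OF N1] by (simp add: s1_def)

lemma d_s2: "((\<lambda>y. s2 N (U m y t)) has_vector_derivative s3 N (U m x t) + s21 N (U m x t)) (at x)"
  using Wx[of m t "k2 N" x] SH1_k2[OF N1] by (simp add: s2_def)

lemma d_s11: "((\<lambda>y. s11 N (U m y t)) has_vector_derivative s21 N (U m x t) + s111 N (U m x t)) (at x)"
proof (cases "2 \<le> N")
  case True
  then show ?thesis using Wx[of m t "k11 N" x] SH1_k11[OF True] by (simp add: s11_def)
next
  case False
  then show ?thesis by (simp add: s11_def s21_def s111_def)
qed

lemma t_s0: "((\<lambda>s. s0 N (U m x s)) has_vector_derivative - 4 * (s3 N (U m x t) - s21 N (U m x t) + s111 N (U m x t))) (at t)"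
  using Wt[of m x "\<lambda>j. j" t] SH3_k0[OF N1] by (simp add: s0_def)

lemma conj_rel: "det B * cnj (s0 N (U 0 x t)) = s0 N (U 1 x t)"
proof -
  define M0 where "M0 = mat N N (\<lambda>(i,j). (px ^^ j) (\<phi> i) x t)"
  have M0: "M0 \<in> carrier_mat N N" by (simp add: M0_def)
  have s0M: "s0 N (U 0 x t) = det M0"
    unfolding s0_def Dv_def U_def M0_def by (intro arg_cong[of _ _ det] eq_matI) auto
  have cj: "cnj (det M0) = det (map_mat cnj M0)"
    using M0 by (simp add: det_def' [OF M0] det_def'[of "map_mat cnj M0" N])
  have prod: "B * map_mat cnj M0 = mat N N (\<lambda>(i,j). (px ^^ (j + 1)) (\<phi> i) x t)"
    by (rule eq_matI) (use Bc in \<open>auto simp: M0_def scalar_prod_def atLeast0LessThan rel1[simplified]\<close>)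
  have "det B * cnj (s0 N (U 0 x t)) = det (B * map_mat cnj M0)"
    unfolding s0M cj by (rule det_mult[symmetric, OF Bc]) (use M0 in simp)
  also have "\<dots> = s0 N (U 1 x t)"
    unfolding prod s0_def Dv_def U_def by (intro arg_cong[of _ _ det] eq_matI) auto
  finally show ?thesis .
qed

lemma U1: "U 1 x t = (\<lambda>k. U 0 x t (Suc k))"
  unfolding U_def by (intro ext) simp

definition "G0 m = (\<lambda>x t. s0 N (U m x t))"
definition "G1 m = (\<lambda>x t. s1 N (U m x t))"
definition "G2 m = (\<lambda>x t. s2 N (U m x t) + s11 N (U m x t))"
definition "G3 m = (\<lambda>x t. s3 N (U m x t) + s21 N (U m x t) + (s21 N (U m x t) + s111 N (U m x t)))"
definition "GTt m = (\<lambda>x t. - 4 * (s3 N (U m x t) - s21 N (U m x t) + s111 N (U m x t)))"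

lemma hv0: "((\<lambda>y. G0 m y t) has_vector_derivative G1 m x t) (at x)"
  unfolding G0_def G1_def by (rule d_s0)
lemma hv1: "((\<lambda>y. G1 m y t) has_vector_derivative G2 m x t) (at x)"
  unfolding G1_def G2_def by (rule d_s1)
lemma hv2: "((\<lambda>y. G2 m y t) has_vector_derivative G3 m x t) (at x)"
  unfolding G2_def G3_def by (intro has_vector_derivative_add d_s2 d_s11)
lemma hvt: "((\<lambda>s. G0 m x s) has_vector_derivative GTt m x t) (at t)"
  unfolding G0_def GTt_def by (rule t_s0)

lemma pxG: "px (G0 m) = G1 m" "px (G1 m) = G2 m" "px (G2 m) = G3 m" "pt (G0 m) = GTt m"
  by (intro ext px_eq pt_eq hv0 hv1 hv2 hvt)+

lemma pxcG: "px (\<lambda>x t. c * G0 m x t) = (\<lambda>x t. c * G1 m x t)"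
  "px (\<lambda>x t. c * G1 m x t) = (\<lambda>x t. c * G2 m x t)"
  "px (\<lambda>x t. c * G2 m x t) = (\<lambda>x t. c * G3 m x t)"
  "pt (\<lambda>x t. c * G0 m x t) = (\<lambda>x t. c * GTt m x t)"
  by (intro ext px_eq pt_eq has_vector_derivative_mult_right hv0 hv1 hv2 hvt)+

lemma main:
  assumes dB: "det B \<noteq> 0"
  shows "let f = wronskian N \<phi>; fs = (\<lambda>x t. cnj (f x t)) in
           hirota_Dt fs f x t + hirota_Dx3 fs f x t = 0 \<and> hirota_Dx2 fs f x t = 0"
proof -
  define c where "c = inverse (det B)"
  have fW: "wronskian N \<phi> = G0 0"
    unfolding wronskian_def G0_def s0_def Dv_def U_def by (intro ext arg_cong[of _ _ det] eq_matI) auto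
  have fsW: "(\<lambda>x t. cnj (wronskian N \<phi> x t)) = (\<lambda>x t. c * G0 1 x t)"
  proof (intro ext)
    fix x t
    have "det B * cnj (G0 0 x t) = G0 1 x t" using conj_rel unfolding G0_def by simp
    then show "cnj (wronskian N \<phi> x t) = c * G0 1 x t" unfolding fW c_def using dB
      by (simp add: field_simps)
  qed
  let ?u = "U 0 x t"
  have T: "s2 N (U m x t) - s11 N (U m x t) = tr * s0 N (U m x t)"
          "s3 N (U m x t) - s111 N (U m x t) = tr * s1 N (U m x t)" for m
    by (rule trace0, rule trace1)
  have PP: "s11 N (U 1 x t) * s0 N ?u - s1 N (U 1 x t) * s1 N ?u + s0 N (U 1 x t) * s2 N ?u = 0"
           "s21 N (U 1 x t) * s0 N ?u - s2 N (U 1 x t) * s1 N ?u + s0 N (U 1 x t) * s3 N ?u = 0"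
           "s111 N (U 1 x t) * s0 N ?u - s1 N (U 1 x t) * s11 N ?u + s0 N (U 1 x t) * s21 N ?u = 0"
    unfolding U1 by (rule P1[OF N1], rule P1'[OF N1], rule P2[OF N1])
  note FA = final_alg[OF T(1)[of 0] T(2)[of 0] T(1)[of 1] T(2)[of 1] PP, of c]
  show ?thesis
    unfolding Let_def fsW unfolding fW hirota_Dt_def hirota_Dx3_def hirota_Dx2_def px_pow2 px_pow3 pxG pxcG
    using FA unfolding G0_def G1_def G2_def G3_def GTt_def by simp
qed

end

theorem theorem4p2p1:
  fixes N :: nat and A B :: "complex mat" and \<phi> :: "nat \<Rightarrow> real \<Rightarrow> real \<Rightarrow> complex"
  assumes "N \<ge> 1"
    and "A \<in> carrier_mat N N" and "B \<in> carrier_mat N N"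
    and "Determinant.det B \<noteq> 0"
    and "A = B * map_mat cnj B"
    and "\<And>i. i < N \<Longrightarrow> smooth2 (\<phi> i)"
    and "\<And>i x t. i < N \<Longrightarrow> (px ^^ 2) (\<phi> i) x t = (\<Sum>j<N. A $$ (i, j) * \<phi> j x t)"
    and "\<And>i x t. i < N \<Longrightarrow> px (\<phi> i) x t = (\<Sum>j<N. B $$ (i, j) * cnj (\<phi> j x t))"
    and "\<And>i x t. i < N \<Longrightarrow> pt (\<phi> i) x t = - 4 * (px ^^ 3) (\<phi> i) x t"
  shows "\<forall>x t. let f = wronskian N \<phi>; fs = (\<lambda>x t. cnj (f x t)) in
           hirota_Dt fs f x t + hirota_Dx3 fs f x t = 0 \<and> hirota_Dx2 fs f x t = 0"
proof -
  interpret wsetup N A B \<phi>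
    by (unfold_locales) (use assms in auto)
  show ?thesis using main[OF assms(4)] by blast
qed

end
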